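(* Let $p>1$, $p'=\frac{p}{p-1}$, $\alpha\in[0,1]$, and let $\psi_R,\psi_R^*,P(R)$ be as in the context. Let $\delta>0$, $C_0>0$, $R_1>0$, $\theta\geq0$, $T>R_1$, and let $0\leq w\in L^1_{\rm loc}([0,T);L^1(\mathcal{C}_\Sigma))$. Assume that for every $R\in[R_1,T)$, \[ \delta+\iint_{P(R)}w(x,t)\psi_R(x,t)\,dx\,dt\leq C_0R^{-\frac{\theta}{p'}}\left(\iint_{P(R)}w(x,t)\psi_R^*(x,t)\,dx\,dt\right)^{\frac1p}. \] Then \[ T\leq \begin{cases} \left(R_1^{(p-1)\theta}+(\log2)C_0^p\theta\delta^{-(p-1)}\right)^{\frac{1}{(p-1)\theta}}, & \text{if }\theta>0,\\[5pt] \exp\left(\log R_1+(\log2)(p-1)^{-1}C_0^p\delta^{-(p-1)}\right), & \text{if }\theta=0. \end{cases} \]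
   Context: $\mathcal{C}_\Sigma\subset\mathbb{R}^N$ is an open set (a cone $\mathrm{int}\{\rho\omega:\rho\ge0,\omega\in\Sigma\}$ with $\Sigma\subset S^{N-1}$ connected open with smooth boundary if $N\ge2$; $(0,\infty)$ or $\mathbb{R}$ if $N=1$). $\langle x\rangle=(1+|x|^2)^{1/2}$. Fix $\eta\in C^\infty([0,\infty))$ with $\eta=1$ on $[0,1/2]$, $\eta$ decreasing on $(1/2,1)$, $\eta=0$ on $[1,\infty)$; set $\eta^*(s)=0$ for $s\in[0,1/2)$ and $\eta^*(s)=\eta(s)$ for $s\geq1/2$. For $R>0$ let $s_R(x,t)=R^{-1}(\langle x\rangle^{2-\alpha}+t)$, $\psi_R(x,t)=[\eta(s_R(x,t))]^{2p'}$, $\psi_R^*(x,t)=[\eta^*(s_R(x,t))]^{2p'}$ for $(x,t)\in\mathcal{C}_\Sigma\times[0,\infty)$, and $P(R)=\{(x,t)\in\mathcal{C}_\Sigma\times[0,\infty):\langle x\rangle^{2-\alpha}+t\leq R\}$. *)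

theory Defs
  imports "HOL-Analysis.Analysis"
begin

text \<open>Cone domain C_Sigma in R^N (N = CARD('n)).
  For N = 1: (0,\<infinity>) or R.  (Smoothness of the boundary of Sigma is not imposed.)\<close>
definition cone_domain :: "(real^'n) set \<Rightarrow> bool" where
  "cone_domain C \<longleftrightarrow>
     (if CARD('n) \<ge> 2 then
        (\<exists>\<Sigma>. \<Sigma> \<subseteq> sphere 0 1 \<and> openin (top_of_set (sphere 0 1)) \<Sigma> \<and> connected \<Sigma> \<and> \<Sigma> \<noteq> {} \<and>
              C = interior {\<rho> *\<^sub>R \<omega> | \<rho> \<omega>. \<rho> \<ge> 0 \<and> \<omega> \<in> \<Sigma>})
      else (C = {x. \<forall>i. x $ i > 0} \<or> C = UNIV))"

definition jbr :: "real^'n \<Rightarrow> real" where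
  "jbr x = sqrt (1 + (norm x)\<^sup>2)"

definition cutoff_profile :: "(real \<Rightarrow> real) \<Rightarrow> bool" where
  "cutoff_profile \<eta> \<longleftrightarrow>
     (\<exists>D :: nat \<Rightarrow> real \<Rightarrow> real. D 0 = \<eta> \<and>
        (\<forall>k x. x \<ge> 0 \<longrightarrow> (D k has_real_derivative D (Suc k) x) (at x within {0..}))) \<and>
     (\<forall>s\<in>{0..1/2}. \<eta> s = 1) \<and>
     (\<forall>s1 s2. 1/2 < s1 \<and> s1 < s2 \<and> s2 < 1 \<longrightarrow> \<eta> s2 < \<eta> s1) \<and>
     (\<forall>s\<ge>1. \<eta> s = 0)"

definition eta_star :: "(real \<Rightarrow> real) \<Rightarrow> real \<Rightarrow> real" where
  "eta_star \<eta> s = (if s < 1/2 then 0 else \<eta> s)"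

definition conj_exp :: "real \<Rightarrow> real" where
  "conj_exp p = p / (p - 1)"

definition sR :: "real \<Rightarrow> real \<Rightarrow> real^'n \<Rightarrow> real \<Rightarrow> real" where
  "sR \<alpha> R x t = (jbr x powr (2 - \<alpha>) + t) / R"

definition psiR :: "(real \<Rightarrow> real) \<Rightarrow> real \<Rightarrow> real \<Rightarrow> real \<Rightarrow> real^'n \<Rightarrow> real \<Rightarrow> real" where
  "psiR \<eta> p \<alpha> R x t = \<eta> (sR \<alpha> R x t) powr (2 * conj_exp p)"

definition psiR_star :: "(real \<Rightarrow> real) \<Rightarrow> real \<Rightarrow> real \<Rightarrow> real \<Rightarrow> real^'n \<Rightarrow> real \<Rightarrow> real" where
  "psiR_star \<eta> p \<alpha> R x t = eta_star \<eta> (sR \<alpha> R x t) powr (2 * conj_exp p)"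

definition PR :: "(real^'n) set \<Rightarrow> real \<Rightarrow> real \<Rightarrow> ((real^'n) \<times> real) set" where
  "PR C \<alpha> R = {(x, t). x \<in> C \<and> t \<ge> 0 \<and> jbr x powr (2 - \<alpha>) + t \<le> R}"

end

theory Submission
  imports Defs "HOL-Analysis.Analysis"
begin


lemma eta_cont:
  assumes "cutoff_profile \<eta>"
  shows "continuous_on {0..} \<eta>"
proof -
  obtain D where D0: "D 0 = \<eta>" and DD: "\<forall>k x. x \<ge> 0 \<longrightarrow> (D k has_real_derivative D (Suc k) x) (at x within {0..})"
    using assms unfolding cutoff_profile_def by blast
  have "\<forall>x\<in>{0..}. continuous (at x within {0..}) \<eta>"
    using DD D0 by (metis DERIV_continuous atLeast_iff)
  then show ?thesis by (simp add: continuous_on_eq_continuous_within)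
qed

lemma eta_bounds:
  assumes "cutoff_profile \<eta>" and "u \<ge> 0"
  shows "0 \<le> \<eta> u \<and> \<eta> u \<le> 1"
proof -
  have c: "continuous_on {0..} \<eta>" by (rule eta_cont[OF assms(1)])
  have one: "\<forall>s\<in>{0..1/2}. \<eta> s = 1" and dec: "\<forall>s1 s2. 1/2 < s1 \<and> s1 < s2 \<and> s2 < 1 \<longrightarrow> \<eta> s2 < \<eta> s1"
    and zero: "\<forall>s\<ge>1. \<eta> s = 0" using assms(1) unfolding cutoff_profile_def by blast+
  show ?thesis
  proof (cases "u \<le> 1/2")
    case True then show ?thesis using one assms(2) by auto
  next
    case False
    show ?thesis
    proof (cases "u \<ge> 1")
      case True then show ?thesis using zero by auto
    next
      case F2: False
      have t1: "(\<eta> \<longlongrightarrow> \<eta> (1/2)) (at_right (1/2))"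
      proof -
        have "(\<eta> \<longlongrightarrow> \<eta> (1/2)) (at (1/2) within {0..})"
          using c by (simp add: continuous_on_def)
        then show ?thesis by (rule tendsto_mono[rotated]) (auto intro: at_le)
      qed
      have t2: "(\<eta> \<longlongrightarrow> \<eta> 1) (at_left 1)"
      proof -
        have "(\<eta> \<longlongrightarrow> \<eta> 1) (at 1 within {0..})"
          using c by (simp add: continuous_on_def)
        then have "(\<eta> \<longlongrightarrow> \<eta> 1) (at 1 within {0..1})"
          by (rule tendsto_mono[rotated]) (auto intro: at_le)
        then show ?thesis by (simp add: at_within_Icc_at_left)
      qed
      have e1: "eventually (\<lambda>v. \<eta> u \<le> \<eta> v) (at_right (1/2))"
        unfolding eventually_at_right_field using False
        by (intro exI[of _ u]) (use dec F2 in \<open>auto intro: less_imp_le\<close>)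
      have e2: "eventually (\<lambda>v. \<eta> v \<le> \<eta> u) (at_left 1)"
        unfolding eventually_at_left_field using F2
        by (intro exI[of _ u]) (use dec False in \<open>auto intro: less_imp_le\<close>)
      have "\<eta> u \<le> \<eta> (1/2)" by (rule tendsto_lowerbound[OF t1 e1]) simp
      moreover have "\<eta> 1 \<le> \<eta> u" by (rule tendsto_upperbound[OF t2 e2]) simp
      ultimately show ?thesis using one zero by auto
    qed
  qed
qed

lemma eta_antimono:
  assumes "cutoff_profile \<eta>" and "0 \<le> a" and "a \<le> b"
  shows "\<eta> b \<le> \<eta> a"
proof -
  have one: "\<forall>s\<in>{0..1/2}. \<eta> s = 1" and dec: "\<forall>s1 s2. 1/2 < s1 \<and> s1 < s2 \<and> s2 < 1 \<longrightarrow> \<eta> s2 < \<eta> s1"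
    and zero: "\<forall>s\<ge>1. \<eta> s = 0" using assms(1) unfolding cutoff_profile_def by blast+
  have ba: "0 \<le> \<eta> b \<and> \<eta> b \<le> 1" "0 \<le> \<eta> a \<and> \<eta> a \<le> 1" using eta_bounds assms by auto
  show ?thesis
  proof (cases "a \<le> 1/2")
    case True then show ?thesis using one ba assms by auto
  next
    case False
    show ?thesis
    proof (cases "b \<ge> 1")
      case True then show ?thesis using zero ba by auto
    next
      case F2: False
      then show ?thesis using dec False assms by (cases "a = b") (auto intro: less_imp_le)
    qed
  qed
qed



lemma tonelli_bound:
  fixes wK ss :: "(real^'n::finite) \<times> real \<Rightarrow> real" and \<eta> :: "real \<Rightarrow> real"
  assumes e: "cutoff_profile \<eta>" and q: "q > 0" and R1: "0 < R1" "R1 \<le> R"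
    and wint: "integrable lborel wK" and wnn: "\<And>z. 0 \<le> wK z"
    and ssm: "ss \<in> borel_measurable borel" and ss1: "\<And>z. wK z \<noteq> 0 \<Longrightarrow> 1 \<le> ss z"
  shows "(\<lambda>r. (\<integral> z. wK z * eta_star \<eta> (max (ss z / r) 0) powr q \<partial>lborel) / r) integrable_on {R1..R} \<and>
    integral {R1..R} (\<lambda>r. (\<integral> z. wK z * eta_star \<eta> (max (ss z / r) 0) powr q \<partial>lborel) / r)
      \<le> ln 2 * (\<integral> z. wK z * \<eta> (max (ss z / R) 0) powr q \<partial>lborel)"
proof -
  define E where "E u = \<eta> (max u 0)" for u
  define Es where "Es u = eta_star \<eta> (max u 0)" for u
  have eqs: "\<And>u. eta_star \<eta> (max u 0) = Es u" "\<And>u. \<eta> (max u 0) = E u" by (simp_all add: E_def Es_def)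
  have Ec: "continuous_on UNIV E"
    unfolding E_def
    by (rule continuous_on_compose2[OF eta_cont[OF e]]) (auto intro!: continuous_intros)
  have Em[measurable]: "E \<in> borel_measurable borel"
    using Ec by (rule borel_measurable_continuous_onI)
  have Es_eq: "Es = (\<lambda>u. if max u 0 < 1/2 then 0 else E u)"
    unfolding Es_def E_def eta_star_def by (rule refl)
  have Esm[measurable]: "Es \<in> borel_measurable borel"
    unfolding Es_eq by measurable
  have Eb: "0 \<le> E u \<and> E u \<le> 1" for u unfolding E_def using eta_bounds[OF e] by simp
  have Esb: "0 \<le> Es u \<and> Es u \<le> 1" for u using Eb[of u] unfolding Es_eq by auto
  have ssm'[measurable]: "ss \<in> borel_measurable borel" by (rule ssm)
  have wm[measurable]: "wK \<in> borel_measurable borel"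
    using borel_measurable_integrable[OF wint] by simp
  have pb: "0 \<le> x \<Longrightarrow> x \<le> 1 \<Longrightarrow> x powr q \<le> 1" for x
    using q by (intro powr_le1) auto
  define G where "G r = (\<integral> z. wK z * Es (ss z / r) powr q \<partial>lborel)" for r
  define h where "h r z = ennreal (indicator {R1..R} r * (wK z * Es (ss z / r) powr q / r))" for r z
  have hm: "case_prod h \<in> borel_measurable (lborel \<Otimes>\<^sub>M lborel)"
  proof -
    have [measurable]: "wK \<in> borel_measurable lborel" "ss \<in> borel_measurable lborel"
      using wm ssm by simp_all
    show ?thesis unfolding h_def by measurable
  qed
  have Gint: "integrable lborel (\<lambda>z. wK z * Es (ss z / r) powr q)" for r
    by (rule Bochner_Integration.integrable_bound[OF wint]) (auto simp: abs_mult wnn Esb intro!: AE_I2 mult_left_le pb)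
  have Gnn: "0 \<le> G r" for r unfolding G_def by (intro integral_nonneg_AE) (auto simp: wnn)
  have inner: "(\<integral>\<^sup>+ z. h r z \<partial>lborel) = ennreal (indicator {R1..R} r * (G r / r))" for r
  proof (cases "r \<in> {R1..R}")
    case True
    then have "(\<integral>\<^sup>+ z. h r z \<partial>lborel) = (\<integral>\<^sup>+ z. ennreal (wK z * Es (ss z / r) powr q / r) \<partial>lborel)"
      by (simp add: h_def)
    also have "\<dots> = ennreal (\<integral> z. wK z * Es (ss z / r) powr q / r \<partial>lborel)"
      using True R1 by (intro nn_integral_eq_integral integrable_divide Gint) (auto simp: wnn)
    finally show ?thesis using True by (simp add: G_def)
  next
    case False then show ?thesis by (simp add: h_def)
  qed
  have Fint: "integrable lborel (\<lambda>z. wK z * E (ss z / R) powr q)"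
    by (rule Bochner_Integration.integrable_bound[OF wint]) (auto simp: abs_mult wnn Eb intro!: AE_I2 mult_left_le pb)
  have perz: "(\<integral>\<^sup>+ r. h r z \<partial>lborel) \<le> ennreal (ln 2 * (wK z * E (ss z / R) powr q))" for z
  proof (cases "wK z = 0")
    case True then show ?thesis by (simp add: h_def)
  next
    case False
    define s where "s = ss z"
    have s1: "1 \<le> s" using ss1[OF False] by (simp add: s_def)
    define c where "c = wK z * E (s / R) powr q"
    have c0: "0 \<le> c" by (simp add: c_def wnn)
    have pt: "h r z \<le> ennreal c * ennreal (indicator {s .. 2 * s} r * (1 / r))" for r
    proof (cases "r \<in> {R1..R}")
      case False then show ?thesis by (simp add: h_def)
    next
      case True
      then have r0: "0 < r" "r \<le> R" using R1 by auto
      have key: "Es (s / r) powr q \<le> indicator {s .. 2 * s} r * E (s / R) powr q"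
      proof -
        consider "r < s" | "2 * s < r" | "s \<le> r \<and> r \<le> 2 * s" by linarith
        then show ?thesis
        proof cases
          case 1
          then have "1 < s / r" using r0 by (simp add: field_simps)
          then have "Es (s / r) = 0" using e unfolding Es_def eta_star_def cutoff_profile_def by auto
          then show ?thesis using Eb by (simp add: indicator_def)
        next
          case 2
          then have "s / r < 1/2" using r0 s1 by (simp add: field_simps)
          then have "Es (s / r) = 0" unfolding Es_def eta_star_def by auto
          then show ?thesis using Eb by (simp add: indicator_def)
        next
          case 3
          have ge: "1/2 \<le> s / r" using 3 r0 by (simp add: field_simps)
          have sr: "s / R \<le> s / r" using r0 s1 by (intro divide_left_mono) auto
          have "0 \<le> s / r" using s1 r0 by simp
          then have mx: "max (s / r) 0 = s / r" by simp
          have "Es (s / r) = \<eta> (s / r)" using ge unfolding Es_def eta_star_def mx by simp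
          also have "\<dots> \<le> \<eta> (s / R)" using eta_antimono[OF e _ sr] s1 r0 by simp
          also have "\<dots> = E (s / R)" using s1 r0 by (simp add: E_def)
          finally have "Es (s / r) powr q \<le> E (s / R) powr q"
            using Esb q by (intro powr_mono2) auto
          then show ?thesis using 3 by (simp add: indicator_def)
        qed
      qed
      have "h r z = ennreal (wK z * Es (s / r) powr q / r)" using True by (simp add: h_def s_def)
      also have "\<dots> \<le> ennreal (c * (indicator {s .. 2 * s} r * (1 / r)))"
      proof (rule ennreal_leI)
        have "wK z * Es (s / r) powr q \<le> wK z * (indicator {s .. 2 * s} r * E (s / R) powr q)"
          by (intro mult_left_mono key wnn)
        then show "wK z * Es (s / r) powr q / r \<le> c * (indicator {s .. 2 * s} r * (1 / r))"
          using r0 by (simp add: c_def divide_right_mono field_simps)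
      qed
      also have "\<dots> = ennreal c * ennreal (indicator {s .. 2 * s} r * (1 / r))"
        using c0 r0 by (subst ennreal_mult[symmetric]) auto
      finally show ?thesis .
    qed
    have lnint: "((\<lambda>r. 1 / r) has_integral ln 2) {s .. 2 * s}"
    proof -
      have "((\<lambda>r. 1 / r) has_integral (ln (2 * s) - ln s)) {s .. 2 * s}"
      proof (rule fundamental_theorem_of_calculus)
        show "s \<le> 2 * s" using s1 by simp
        fix x assume "x \<in> {s .. 2 * s}"
        then show "(ln has_vector_derivative 1 / x) (at x within {s .. 2 * s})"
          using s1 by (auto intro!: has_field_derivative_at_within DERIV_ln_divide
              simp: has_real_derivative_iff_has_vector_derivative[symmetric])
      qed
      moreover have "ln (2 * s) - ln s = ln 2" using s1 by (simp add: ln_mult)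
      ultimately show ?thesis by simp
    qed
    have "(\<integral>\<^sup>+ r. h r z \<partial>lborel) \<le> (\<integral>\<^sup>+ r. ennreal c * ennreal (indicator {s .. 2 * s} r * (1 / r)) \<partial>lborel)"
      by (intro nn_integral_mono pt)
    also have "\<dots> = ennreal c * (\<integral>\<^sup>+ r. ennreal (indicator {s .. 2 * s} r * (1 / r)) \<partial>lborel)"
      by (intro nn_integral_cmult) measurable
    also have "(\<integral>\<^sup>+ r. ennreal (indicator {s .. 2 * s} r * (1 / r)) \<partial>lborel) = ennreal (ln 2)"
      using s1 by (intro nn_integral_has_integral_lebesgue lnint) auto
    also have "ennreal c * ennreal (ln 2) = ennreal (ln 2 * (wK z * E (ss z / R) powr q))"
      using c0 by (simp add: ennreal_mult c_def s_def mult.commute)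
    finally show ?thesis .
  qed
  define g where "g r = indicator {R1..R} r * (G r / r)" for r
  have gnn: "0 \<le> g r" for r using Gnn[of r] R1 by (auto simp: g_def indicator_def)
  have g_eq: "g r = enn2real (\<integral>\<^sup>+ z. h r z \<partial>lborel)" for r
    using inner[of r] gnn[of r] by (simp add: g_def)
  have gm[measurable]: "g \<in> borel_measurable lborel"
    unfolding g_eq[abs_def] using lborel.borel_measurable_nn_integral[OF hm] by measurable
  define B where "B = ln 2 * (\<integral> z. wK z * E (ss z / R) powr q \<partial>lborel)"
  have B0: "0 \<le> B" unfolding B_def by (auto intro!: integral_nonneg_AE simp: wnn Eb)
  have "(\<integral>\<^sup>+ r. ennreal (g r) \<partial>lborel) = (\<integral>\<^sup>+ r. (\<integral>\<^sup>+ z. h r z \<partial>lborel) \<partial>lborel)"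
    by (simp add: inner g_def)
  also have "\<dots> = (\<integral>\<^sup>+ z. (\<integral>\<^sup>+ r. h r z \<partial>lborel) \<partial>lborel)"
    by (rule lborel_pair.Fubini'[OF hm, symmetric])
  also have "\<dots> \<le> (\<integral>\<^sup>+ z. ennreal (ln 2 * (wK z * E (ss z / R) powr q)) \<partial>lborel)"
    by (intro nn_integral_mono perz)
  also have "\<dots> = ennreal B"
    unfolding B_def
    by (subst nn_integral_eq_integral) (auto intro!: integrable_mult_right Fint simp: wnn Eb)
  finally have gB: "(\<integral>\<^sup>+ r. ennreal (g r) \<partial>lborel) \<le> ennreal B" .
  have gint: "integrable lborel g"
    using gB gnn by (intro integrableI_bounded) (auto simp: top_unique intro: le_less_trans)
  have gI: "integral\<^sup>L lborel g \<le> B"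
  proof -
    have "integral\<^sup>L lborel g = enn2real (\<integral>\<^sup>+ r. ennreal (g r) \<partial>lborel)"
      by (rule integral_eq_nn_integral) (auto simp: gnn)
    also have "\<dots> \<le> enn2real (ennreal B)"
      using gB by (intro enn2real_mono) auto
    finally show ?thesis using B0 by simp
  qed
  have si: "set_integrable lborel {R1..R} (\<lambda>r. G r / r)"
    using gint unfolding set_integrable_def g_def by simp
  have "(\<lambda>r. G r / r) integrable_on {R1..R}" using set_borel_integral_eq_integral(1)[OF si] .
  moreover have "integral {R1..R} (\<lambda>r. G r / r) \<le> B"
    using set_borel_integral_eq_integral(2)[OF si] gI
    unfolding set_lebesgue_integral_def g_def by simp
  ultimately show ?thesis unfolding eqs G_def[symmetric] B_def by simp
qed



lemma ode_bound:
  fixes g :: "real \<Rightarrow> real"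
  assumes p: "p > 1" and d: "\<delta> > 0" and C0: "C0 > 0" and th: "\<theta> \<ge> 0" and R1: "R1 > 0" "R1 \<le> R"
    and gint: "g integrable_on {R1..R}"
    and key: "\<And>r. r \<in> {R1..R} \<Longrightarrow>
       C0 powr (-p) * r powr (\<theta> * (p - 1) - 1) * (\<delta> + integral {R1..r} g / ln 2) powr p \<le> g r"
  shows "(\<theta> > 0 \<longrightarrow> R powr ((p - 1) * \<theta>) \<le> R1 powr ((p - 1) * \<theta>) + ln 2 * C0 powr p * \<theta> * \<delta> powr (- (p - 1)))
    \<and> (\<theta> = 0 \<longrightarrow> ln R - ln R1 \<le> ln 2 * (1 / (p - 1)) * C0 powr p * \<delta> powr (- (p - 1)))"
proof -
  define k where "k = \<theta> * (p - 1)"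
  have k0: "0 \<le> k" using th p by (simp add: k_def)
  have l2: "0 < ln (2::real)" by simp
  define Y where "Y r = integral {R1..r} g" for r
  have gsub: "r \<in> {R1..R} \<Longrightarrow> g integrable_on {R1..r}" for r
    by (rule integrable_on_subinterval[OF gint]) auto
  have gnn: "r \<in> {R1..R} \<Longrightarrow> 0 \<le> g r" for r
    using key[of r] C0 by (smt (verit) mult_nonneg_nonneg powr_ge_zero)
  have Ynn: "r \<in> {R1..R} \<Longrightarrow> 0 \<le> Y r" for r
    unfolding Y_def by (rule integral_nonneg[OF gsub]) (auto intro!: gnn)
  have Yc: "continuous_on {R1..R} Y"
    unfolding Y_def by (rule indefinite_integral_continuous_1[OF gint])
  define Z where "Z r = \<delta> + Y r / ln 2" for r
  have Zpos: "r \<in> {R1..R} \<Longrightarrow> 0 < Z r" for r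
    using Ynn[of r] d l2 unfolding Z_def by (simp add: add_pos_nonneg)
  have Zc: "continuous_on {R1..R} Z"
    unfolding Z_def by (intro continuous_intros Yc) simp
  define c where "c = C0 powr (-p) / ln 2"
  have c0: "0 < c" unfolding c_def using C0 by simp
  define f where "f r = c * r powr (k - 1) * Z r powr p" for r
  have fc: "continuous_on {R1..R} f"
    unfolding f_def
    by (intro continuous_intros Zc) (use R1 Zpos in \<open>auto simp: less_imp_neq[symmetric]\<close>)
  have fnn: "0 \<le> f r" for r unfolding f_def using c0 by simp
  define W where "W r = integral {R1..r} f" for r
  have fint: "f integrable_on {R1..R}" by (rule integrable_continuous_interval[OF fc])
  have fsub: "r \<in> {R1..R} \<Longrightarrow> f integrable_on {R1..r}" for r
    by (rule integrable_on_subinterval[OF fint]) auto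
  have Wnn: "r \<in> {R1..R} \<Longrightarrow> 0 \<le> W r" for r
    unfolding W_def by (rule integral_nonneg[OF fsub]) (auto intro!: fnn)
  have ZW: "r \<in> {R1..R} \<Longrightarrow> \<delta> + W r \<le> Z r" for r
  proof -
    assume r: "r \<in> {R1..R}"
    have "ln 2 * W r = integral {R1..r} (\<lambda>x. ln 2 * f x)"
      unfolding W_def by simp
    also have "\<dots> \<le> Y r"
      unfolding Y_def
    proof (rule integral_le)
      show "(\<lambda>x. ln 2 * f x) integrable_on {R1..r}" using fsub[OF r] by simp
      show "g integrable_on {R1..r}" by (rule gsub[OF r])
      fix x assume x: "x \<in> {R1..r}"
      then have "x \<in> {R1..R}" using r by auto
      from key[OF this] show "ln 2 * f x \<le> g x"
        unfolding f_def c_def Z_def Y_def k_def by simp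
    qed
    finally show ?thesis unfolding Z_def using l2 by (simp add: field_simps)
  qed
  have Wd: "x \<in> {R1<..<R} \<Longrightarrow> (W has_real_derivative f x) (at x)" for x
  proof -
    assume x: "x \<in> {R1<..<R}"
    have "(W has_real_derivative f x) (at x within {R1..R})"
      unfolding W_def by (rule integral_has_real_derivative[OF fc]) (use x in auto)
    moreover have "at x within {R1..R} = at x"
      by (rule at_within_interior) (use x in auto)
    ultimately show ?thesis by simp
  qed
  have Wc: "continuous_on {R1..R} W"
    unfolding W_def by (rule indefinite_integral_continuous_1[OF fint])
  define L where "L x = (if \<theta> > 0 then x powr k / k else ln x)" for x
  have Ld: "0 < x \<Longrightarrow> (L has_real_derivative x powr (k - 1)) (at x)" for x
  proof (cases "\<theta> > 0")
    case True
    assume x: "0 < x"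
    have kp: "0 < k" using True p by (simp add: k_def)
    have "((\<lambda>x. x powr k / k) has_real_derivative (k * x powr (k - 1)) / k) (at x)"
      by (intro DERIV_cdivide has_real_derivative_powr x)
    then show ?thesis using kp True unfolding L_def by simp
  next
    case False
    assume x: "0 < x"
    have k: "k = 0" using False th by (simp add: k_def)
    have "(ln has_real_derivative 1 / x) (at x)" using x by (rule DERIV_ln_divide)
    moreover have "x powr (k - 1) = 1 / x" using x k by (simp add: powr_minus_divide)
    ultimately show ?thesis using False unfolding L_def by simp
  qed
  have Lc: "continuous_on {R1..R} L"
  proof (cases "\<theta> > 0")
    case True
    then have "k \<noteq> 0" using p by (simp add: k_def)
    then show ?thesis unfolding L_def using R1 True by (auto intro!: continuous_intros)
  next
    case False then show ?thesis unfolding L_def using R1 by (auto intro!: continuous_intros)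
  qed
  define \<Psi> where "\<Psi> x = - ((\<delta> + W x) powr (1 - p)) / (p - 1) - c * L x" for x
  have "\<Psi> R1 \<le> \<Psi> R"
  proof (rule DERIV_nonneg_imp_increasing_open[OF R1(2)])
    fix x assume x1: "R1 < x" and x2: "x < R"
    then have xI: "x \<in> {R1..R}" "x \<in> {R1<..<R}" by auto
    have pos: "0 < \<delta> + W x" using Wnn[OF xI(1)] d by simp
    have d1: "((\<lambda>x. (\<delta> + W x) powr (1 - p)) has_real_derivative
        (1 - p) * (\<delta> + W x) powr (1 - p - of_nat 1) * f x) (at x)"
    proof (rule DERIV_fun_powr[where g="\<lambda>x. \<delta> + W x"])
      show "((\<lambda>x. \<delta> + W x) has_real_derivative f x) (at x)"
        using Wd[OF xI(2)] by (intro derivative_eq_intros) auto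
    qed (rule pos)
    have "(\<Psi> has_real_derivative
        - ((1 - p) * (\<delta> + W x) powr (1 - p - of_nat 1) * f x) / (p - 1) - c * x powr (k - 1)) (at x)"
      unfolding \<Psi>_def
      by (intro DERIV_diff DERIV_cdivide DERIV_minus DERIV_cmult d1 Ld) (use x1 R1 in auto)
    moreover have "0 \<le> - ((1 - p) * (\<delta> + W x) powr (1 - p - of_nat 1) * f x) / (p - 1) - c * x powr (k - 1)"
    proof -
      have e1: "- ((1 - p) * (\<delta> + W x) powr (1 - p - of_nat 1) * f x) / (p - 1)
          = (\<delta> + W x) powr (- p) * f x" using p by (simp add: field_simps)
      have "(\<delta> + W x) powr p \<le> Z x powr p" using ZW[OF xI(1)] pos p by (intro powr_mono2) auto
      then have "1 \<le> (\<delta> + W x) powr (- p) * Z x powr p"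
        using pos by (simp add: powr_minus field_simps)
      then have "c * x powr (k - 1) * 1 \<le> c * x powr (k - 1) * ((\<delta> + W x) powr (- p) * Z x powr p)"
        using c0 by (intro mult_left_mono) auto
      then have "0 \<le> (\<delta> + W x) powr (- p) * f x - c * x powr (k - 1)"
        unfolding f_def by (simp add: algebra_simps)
      then show ?thesis using e1 by linarith
    qed
    ultimately show "\<exists>y. (\<Psi> has_real_derivative y) (at x) \<and> 0 \<le> y" by blast
  next
    show "continuous_on {R1..R} \<Psi>"
      unfolding \<Psi>_def
      by (intro continuous_intros Wc Lc) (use d Wnn p in \<open>auto simp: less_imp_neq[symmetric] add_pos_nonneg\<close>)
  qed
  moreover have "W R1 = 0" unfolding W_def by simp
  ultimately have "- (\<delta> powr (1 - p)) / (p - 1) - c * L R1 \<le> - ((\<delta> + W R) powr (1 - p)) / (p - 1) - c * L R"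
    unfolding \<Psi>_def by simp
  moreover have "0 \<le> (\<delta> + W R) powr (1 - p) / (p - 1)" using p by simp
  ultimately have main: "c * (L R - L R1) \<le> \<delta> powr (1 - p) / (p - 1)"
    by (simp add: algebra_simps)
  define M where "M = \<delta> powr (1 - p) * (ln 2 * C0 powr p)"
  have cinv: "c * (ln 2 * C0 powr p) = 1"
    unfolding c_def using C0 by (simp add: powr_minus field_simps)
  have main2: "L R - L R1 \<le> M / (p - 1)"
  proof -
    have "(c * (L R - L R1)) * (ln 2 * C0 powr p) = (L R - L R1) * (c * (ln 2 * C0 powr p))"
      by (simp only: ac_simps)
    then have "(L R - L R1) = (c * (L R - L R1)) * (ln 2 * C0 powr p)" using cinv by simp
    also have "\<dots> \<le> \<delta> powr (1 - p) / (p - 1) * (ln 2 * C0 powr p)"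
      using main C0 by (intro mult_right_mono) auto
    finally show ?thesis unfolding M_def by simp
  qed
  have dm: "\<delta> powr (- (p - 1)) = \<delta> powr (1 - p)" by simp
  show ?thesis
  proof (intro conjI impI)
    assume t: "\<theta> > 0"
    have kp: "0 < k" using t p by (simp add: k_def)
    have "R powr k / k - R1 powr k / k \<le> M / (p - 1)" using main2 t unfolding L_def by simp
    then have "R powr k - R1 powr k \<le> k * (M / (p - 1))" using kp by (simp add: field_simps)
    also have "k * (M / (p - 1)) = ln 2 * C0 powr p * \<theta> * \<delta> powr (- (p - 1))"
      unfolding k_def M_def dm using p by (simp add: field_simps)
    finally show "R powr ((p - 1) * \<theta>) \<le> R1 powr ((p - 1) * \<theta>) + ln 2 * C0 powr p * \<theta> * \<delta> powr (- (p - 1))"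
      unfolding k_def by (simp add: mult.commute)
  next
    assume t: "\<theta> = 0"
    then have "ln R - ln R1 \<le> M / (p - 1)" using main2 unfolding L_def by simp
    also have "M / (p - 1) = ln 2 * (1 / (p - 1)) * C0 powr p * \<delta> powr (- (p - 1))"
      unfolding M_def dm by (simp add: field_simps)
    finally show "ln R - ln R1 \<le> ln 2 * (1 / (p - 1)) * C0 powr p * \<delta> powr (- (p - 1))" .
  qed
qed



lemma jbr_ge1: "1 \<le> jbr x"
  unfolding jbr_def by simp

lemma conv:
  fixes C :: "(real^'n::finite) set" and w :: "real^'n \<Rightarrow> real \<Rightarrow> real" and \<phi> :: "real \<Rightarrow> real"
  assumes phi: "\<forall>v\<ge>1. \<phi> v = 0" and r: "0 < \<rho>" "\<rho> \<le> R" and q: "q > 0"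
  shows "(LINT z : PR C \<alpha> \<rho> | lborel. w (fst z) (snd z) * (\<phi> (sR \<alpha> \<rho> (fst z) (snd z)) powr q))
    = (\<integral> z. indicator (C \<times> {0..R}) z * w (fst z) (snd z) *
          \<phi> (max ((jbr (fst z) powr (2 - \<alpha>) + snd z) / \<rho>) 0) powr q \<partial>lborel)"
  unfolding set_lebesgue_integral_def
proof (intro Bochner_Integration.integral_cong refl)
  fix z :: "(real^'n) \<times> real"
  obtain x t where z: "z = (x, t)" by (cases z)
  have j0: "0 \<le> jbr x powr (2 - \<alpha>)" by simp
  show "indicator (PR C \<alpha> \<rho>) z *\<^sub>R (w (fst z) (snd z) * \<phi> (sR \<alpha> \<rho> (fst z) (snd z)) powr q)
    = indicator (C \<times> {0..R}) z * w (fst z) (snd z) *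
          \<phi> (max ((jbr (fst z) powr (2 - \<alpha>) + snd z) / \<rho>) 0) powr q"
  proof (cases "z \<in> PR C \<alpha> \<rho>")
    case True
    then have h: "x \<in> C" "0 \<le> t" "jbr x powr (2 - \<alpha>) + t \<le> \<rho>" by (auto simp: PR_def z)
    have "t \<le> R" using h(3) j0 r(2) by linarith
    then have "z \<in> C \<times> {0..R}" using h by (auto simp: z)
    moreover have "max ((jbr x powr (2 - \<alpha>) + t) / \<rho>) 0 = (jbr x powr (2 - \<alpha>) + t) / \<rho>"
      using h j0 r by simp
    ultimately show ?thesis using True by (simp add: z sR_def)
  next
    case False
    show ?thesis
    proof (cases "z \<in> C \<times> {0..R}")
      case False then show ?thesis using \<open>z \<notin> PR C \<alpha> \<rho>\<close> by simp
    next
      case True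
      then have h: "x \<in> C" "0 \<le> t" by (auto simp: z)
      then have "\<rho> < jbr x powr (2 - \<alpha>) + t" using False by (auto simp: PR_def z)
      then have "1 \<le> (jbr x powr (2 - \<alpha>) + t) / \<rho>" using r by simp
      then have "\<phi> (max ((jbr x powr (2 - \<alpha>) + t) / \<rho>) 0) = 0" using phi by simp
      then show ?thesis using False q by (simp add: z)
    qed
  qed
qed

theorem lemma3p13:
  fixes C :: "(real^'n) set" and \<eta> :: "real \<Rightarrow> real" and w :: "real^'n \<Rightarrow> real \<Rightarrow> real"
    and p \<alpha> \<delta> C0 R1 \<theta> T :: real
  assumes "cone_domain C" and "cutoff_profile \<eta>"
    and "p > 1" and "0 \<le> \<alpha>" and "\<alpha> \<le> 1"
    and "\<delta> > 0" and "C0 > 0" and "R1 > 0" and "\<theta> \<ge> 0" and "T > R1"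
    and w_nonneg: "\<forall>x\<in>C. \<forall>t\<in>{0..<T}. w x t \<ge> 0"
    and w_loc: "\<forall>T'\<in>{0..<T}. set_integrable lborel (C \<times> {0..T'}) (\<lambda>(x, t). w x t)"
    and main: "\<forall>R\<in>{R1..<T}.
       \<delta> + (LINT z : PR C \<alpha> R | lborel. w (fst z) (snd z) * psiR \<eta> p \<alpha> R (fst z) (snd z))
         \<le> C0 * R powr (- \<theta> / conj_exp p) *
            (LINT z : PR C \<alpha> R | lborel. w (fst z) (snd z) * psiR_star \<eta> p \<alpha> R (fst z) (snd z)) powr (1 / p)"
  shows "(\<theta> > 0 \<longrightarrow>
            T \<le> (R1 powr ((p - 1) * \<theta>) + ln 2 * C0 powr p * \<theta> * \<delta> powr (- (p - 1)))
                   powr (1 / ((p - 1) * \<theta>)))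
       \<and> (\<theta> = 0 \<longrightarrow>
            T \<le> exp (ln R1 + ln 2 * (1 / (p - 1)) * C0 powr p * \<delta> powr (- (p - 1))))"
proof -
  note e = assms(2) and p = assms(3) and al = assms(4,5) and d = assms(6) and C0 = assms(7)
    and R1 = assms(8) and th = assms(9) and T = assms(10)
  define q where "q = 2 * conj_exp p"
  have q0: "0 < q" using p by (simp add: q_def conj_exp_def)
  define ss :: "(real^'n) \<times> real \<Rightarrow> real" where "ss z = jbr (fst z) powr (2 - \<alpha>) + snd z" for z
  have ssm: "ss \<in> borel_measurable borel"
  proof (rule borel_measurable_continuous_onI)
    have "continuous_on UNIV (\<lambda>z::(real^'n) \<times> real. jbr (fst z))"
      unfolding jbr_def by (intro continuous_intros)
    moreover have "\<And>z::(real^'n) \<times> real. jbr (fst z) \<noteq> 0" using jbr_ge1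
      by (metis not_one_le_zero)
    ultimately show "continuous_on UNIV ss"
      unfolding ss_def by (intro continuous_intros) auto
  qed
  define G where "G r = (LINT z : PR C \<alpha> r | lborel. w (fst z) (snd z) * psiR_star \<eta> p \<alpha> r (fst z) (snd z))" for r
  define F where "F r = (LINT z : PR C \<alpha> r | lborel. w (fst z) (snd z) * psiR \<eta> p \<alpha> r (fst z) (snd z))" for r
  define g where "g r = G r / r" for r
  have es0: "\<forall>v\<ge>1. eta_star \<eta> v = 0" using e unfolding eta_star_def cutoff_profile_def by auto
  have e0: "\<forall>v\<ge>1. \<eta> v = 0" using e unfolding cutoff_profile_def by auto
  have Gnn: "0 \<le> G r" if "r < T" for r
    unfolding G_def set_lebesgue_integral_def
  proof (intro integral_nonneg_AE AE_I2)
    fix z :: "(real^'n) \<times> real"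
    obtain x t where z: "z = (x, t)" by (cases z)
    show "0 \<le> indicator (PR C \<alpha> r) z *\<^sub>R (w (fst z) (snd z) * psiR_star \<eta> p \<alpha> r (fst z) (snd z))"
    proof (cases "z \<in> PR C \<alpha> r")
      case True
      then have "x \<in> C" "0 \<le> t" "jbr x powr (2 - \<alpha>) + t \<le> r" by (auto simp: PR_def z)
      moreover have "0 \<le> jbr x powr (2 - \<alpha>)" by simp
      ultimately have "t < T" using that by linarith
      then have "0 \<le> w x t" using w_nonneg \<open>x \<in> C\<close> \<open>0 \<le> t\<close> by auto
      then show ?thesis by (simp add: z psiR_star_def)
    qed simp
  qed
  have step: "g integrable_on {R1..R} \<and> integral {R1..R} g \<le> ln 2 * F R" if R: "R1 \<le> R" "R < T" for R
  proof -
    define wK where "wK z = indicator (C \<times> {0..R}) z * w (fst z) (snd z)" for z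
    have wint: "integrable lborel wK"
      using w_loc R R1 unfolding set_integrable_def wK_def by (auto simp: case_prod_beta)
    have wnn: "0 \<le> wK z" for z
      using w_nonneg R unfolding wK_def by (auto simp: indicator_def)
    have ss1: "1 \<le> ss z" if "wK z \<noteq> 0" for z
    proof -
      have "0 \<le> snd z" using that by (auto simp: wK_def indicator_def)
      moreover have "1 \<le> jbr (fst z) powr (2 - \<alpha>)" using al by (intro ge_one_powr_ge_zero jbr_ge1) auto
      ultimately show ?thesis by (simp add: ss_def)
    qed
    note T1 = tonelli_bound[OF e q0 R1 R(1) wint wnn ssm ss1]
    have geq: "g r = (\<integral> z. wK z * eta_star \<eta> (max (ss z / r) 0) powr q \<partial>lborel) / r" if "r \<in> {R1..R}" for r
      unfolding g_def G_def psiR_star_def q_def[symmetric] wK_def ss_def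
      using conv[OF es0, of r R q C \<alpha> w] that R1 q0 by simp
    have feq: "F R = (\<integral> z. wK z * \<eta> (max (ss z / R) 0) powr q \<partial>lborel)"
      unfolding F_def psiR_def q_def[symmetric] wK_def ss_def
      using conv[OF e0, of R R q C \<alpha> w] R R1 q0 by simp
    show ?thesis
      using T1 geq feq
      by (metis (no_types, lifting) integrable_eq integral_cong)
  qed
  define k where "k = \<theta> * (p - 1)"
  have key: "C0 powr (-p) * r powr (\<theta> * (p - 1) - 1) * (\<delta> + integral {R1..r} g / ln 2) powr p \<le> g r"
    if r: "R1 \<le> r" "r < T" for r
  proof -
    have r0: "0 < r" using r R1 by simp
    note st = step[OF r]
    have Gr: "0 \<le> G r" using Gnn r by simp
    have gnn: "0 \<le> g x" if "x \<in> {R1..r}" for x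
      using Gnn[of x] that r R1 by (simp add: g_def)
    have I0: "0 \<le> integral {R1..r} g"
      using st gnn by (intro integral_nonneg) auto
    define A where "A = \<delta> + integral {R1..r} g / ln 2"
    have A0: "0 \<le> A" using I0 d by (simp add: A_def)
    have "integral {R1..r} g / ln 2 \<le> F r" using st by (simp add: field_simps)
    then have "A \<le> \<delta> + F r" by (simp add: A_def)
    also have "\<dots> \<le> C0 * r powr (- \<theta> / conj_exp p) * G r powr (1 / p)"
      using main r unfolding F_def G_def by auto
    finally have "A powr p \<le> (C0 * r powr (- \<theta> / conj_exp p) * G r powr (1 / p)) powr p"
      using A0 p by (intro powr_mono2) auto
    also have "\<dots> = C0 powr p * r powr (- \<theta> / conj_exp p * p) * G r"
      using C0 r0 Gr p by (simp add: powr_mult powr_powr)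
    also have "- \<theta> / conj_exp p * p = - k"
      using p unfolding k_def conj_exp_def by (simp add: field_simps)
    finally have h1: "A powr p \<le> C0 powr p * r powr (- k) * G r" .
    have "C0 powr (-p) * r powr (k - 1) * A powr p \<le> C0 powr (-p) * r powr (k - 1) * (C0 powr p * r powr (- k) * G r)"
      by (intro mult_left_mono h1) auto
    also have "\<dots> = G r * (C0 powr (-p) * C0 powr p) * (r powr (k - 1) * r powr (- k))"
      by (simp only: ac_simps)
    also have "\<dots> = G r / r"
    proof -
      have a: "C0 powr (-p) * C0 powr p = 1" using C0 by (simp add: powr_add[symmetric])
      have "r powr (k - 1) * r powr (- k) = r powr (-1)" by (simp add: powr_add[symmetric])
      also have "\<dots> = 1 / r" using r0 by (simp add: powr_minus_divide)
      finally show ?thesis using a by simp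
    qed
    finally show ?thesis unfolding A_def k_def g_def .
  qed
  have bnd: "(\<theta> > 0 \<longrightarrow> R powr ((p - 1) * \<theta>) \<le> R1 powr ((p - 1) * \<theta>) + ln 2 * C0 powr p * \<theta> * \<delta> powr (- (p - 1)))
    \<and> (\<theta> = 0 \<longrightarrow> ln R - ln R1 \<le> ln 2 * (1 / (p - 1)) * C0 powr p * \<delta> powr (- (p - 1)))"
    if R: "R1 \<le> R" "R < T" for R
    by (rule ode_bound[OF p d C0 th R1 R(1)]) (use step[OF R] key R in auto)
  show ?thesis
  proof (intro conjI impI)
    assume t: "\<theta> > 0"
    define X where "X = R1 powr ((p - 1) * \<theta>) + ln 2 * C0 powr p * \<theta> * \<delta> powr (- (p - 1))"
    define B where "B = X powr (1 / ((p - 1) * \<theta>))"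
    show "T \<le> (R1 powr ((p - 1) * \<theta>) + ln 2 * C0 powr p * \<theta> * \<delta> powr (- (p - 1)))
                   powr (1 / ((p - 1) * \<theta>))"
    proof (rule ccontr)
      assume "\<not> ?thesis"
      then have BT: "B < T" unfolding B_def X_def by simp
      define R where "R = (max R1 B + T) / 2"
      have R: "R1 \<le> R" "R < T" "B < R" using BT T by (auto simp: R_def)
      have kp: "0 < (p - 1) * \<theta>" using p t by simp
      have "R powr ((p - 1) * \<theta>) \<le> X" using bnd[OF R(1,2)] t by (simp add: X_def)
      then have "(R powr ((p - 1) * \<theta>)) powr (1 / ((p - 1) * \<theta>)) \<le> B"
        unfolding B_def using kp by (intro powr_mono2) auto
      also have "(R powr ((p - 1) * \<theta>)) powr (1 / ((p - 1) * \<theta>)) = R"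
        using kp R R1 p t by (simp add: powr_powr)
      finally show False using R by simp
    qed
  next
    assume t: "\<theta> = 0"
    define B where "B = exp (ln R1 + ln 2 * (1 / (p - 1)) * C0 powr p * \<delta> powr (- (p - 1)))"
    show "T \<le> exp (ln R1 + ln 2 * (1 / (p - 1)) * C0 powr p * \<delta> powr (- (p - 1)))"
    proof (rule ccontr)
      assume "\<not> ?thesis"
      then have BT: "B < T" unfolding B_def by simp
      define R where "R = (max R1 B + T) / 2"
      have R: "R1 \<le> R" "R < T" "B < R" using BT T by (auto simp: R_def)
      have "ln R \<le> ln R1 + ln 2 * (1 / (p - 1)) * C0 powr p * \<delta> powr (- (p - 1))"
        using bnd[OF R(1,2)] t by simp
      then have "exp (ln R) \<le> B" unfolding B_def by simp
      then show False using R R1 by simp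
    qed
  qed
qed


end
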